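(* Let $\mathbf{E},\mathbf{Y}$ be Euclidean spaces, $\mathcal{X}\subset\mathbf{E}$ nonempty closed convex, $h\colon\mathbf{Y}\to\mathbb{R}$ convex, $F\colon\mathbf{E}\to\mathbf{Y}$ continuously differentiable, $f=h\circ F$, $f_x(y)=h(F(x)+\nabla F(x)(y-x))$, and $\partial f(x)=\nabla F(x)^*\partial h(F(x))$. Assume $\mathcal{X}^*=\operatorname{argmin}_{\mathcal{X}}f\ne\emptyset$, $f(x)-\min_{\mathcal{X}}f\ge\mu\,\mathrm{dist}(x,\mathcal{X}^* )$ for all $x\in\mathcal{X}$, and $|f(y)-f_x(y)|\le a\|y-x\|^2+b\|y-x\|$ for all $x,y\in\mathcal{X}$, where $a>0$, $b\ge0$ and $\mu>2b$. Let $L:=\sup\{\|\zeta\|:\zeta\in\partial f(x),\,x\in\mathcal{X},\,\mathrm{dist}(x,\mathcal{X}^* )\le\frac{\mu-2b}{2a}\}$, assumed finite and positive. Let $\gamma\in(0,1)$ and let $x_0\in\mathcal{X}$ satisfy $\mathrm{dist}(x_0,\mathcal{X}^* )\le\gamma\frac{\mu-2b}{2a}$. Then the iterates of the Polyak subgradient method started at $x_0$ satisfy $$\mathrm{dist}^2(x_{k+1},\mathcal{X}^* )\le\Big(1-\frac{(1-\gamma)\mu(\mu-2b)}{L^2}\Big)\mathrm{dist}^2(x_k,\mathcal{X}^* )\quad\forall k\ge0.$$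
   Context: $\|\cdot\|$ is the Euclidean norm, $\mathrm{dist}$ the Euclidean distance, $\mathrm{proj}_{\mathcal{X}}$ the Euclidean projection, $\nabla F(x)^*$ the adjoint of the Jacobian, and $\partial h$ the convex subdifferential. Polyak subgradient method: given $x_k$, choose $\zeta_k\in\partial f(x_k)$; if $\zeta_k=0$ set $x_{k+1}=x_k$, otherwise $x_{k+1}=\mathrm{proj}_{\mathcal{X}}\big(x_k-\frac{f(x_k)-\min_{\mathcal{X}}f}{\|\zeta_k\|^2}\zeta_k\big)$. *)

theory Defs
  imports "HOL-Analysis.Analysis"
begin

definition convex_subdiff :: "('y::real_inner \<Rightarrow> real) \<Rightarrow> 'y \<Rightarrow> 'y set" where
  "convex_subdiff h w = {v. \<forall>z. h z \<ge> h w + v \<bullet> (z - w)}"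

definition comp_subdiff ::
  "('y::euclidean_space \<Rightarrow> real) \<Rightarrow> ('e::euclidean_space \<Rightarrow> 'y) \<Rightarrow> ('e \<Rightarrow> ('e \<Rightarrow>\<^sub>L 'y)) \<Rightarrow> 'e \<Rightarrow> 'e set" where
  "comp_subdiff h F DF x = adjoint (blinfun_apply (DF x)) ` convex_subdiff h (F x)"

definition argmin_on :: "('e \<Rightarrow> real) \<Rightarrow> 'e set \<Rightarrow> 'e set" where
  "argmin_on f X = {x \<in> X. \<forall>y\<in>X. f x \<le> f y}"

end

theory Submission
  imports Defs
begin


lemma alg_core:
  fixes d e n ip N L a b \<mu> \<gamma> :: real
  assumes d0: "d \<ge> 0" and ed: "e \<ge> \<mu> * d" and n0: "n > 0"
    and ipb: "ip \<ge> e - a * d\<^sup>2 - b * d"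
    and NN: "N \<le> d\<^sup>2 - 2 * (e / n) * ip + (e / n)\<^sup>2 * n"
    and dg: "d \<le> \<gamma> * ((\<mu> - 2 * b) / (2 * a))"
    and nL: "n \<le> L\<^sup>2" and L0: "L > 0"
    and a0: "a > 0" and b0: "b \<ge> 0" and mu: "\<mu> > 2 * b" and g0: "0 < \<gamma>" and g1: "\<gamma> < 1"
  shows "N \<le> (1 - (1 - \<gamma>) * \<mu> * (\<mu> - 2 * b) / L\<^sup>2) * d\<^sup>2"
proof -
  have mu0: "\<mu> > 0" using mu b0 by linarith
  have "\<mu> * d \<ge> 0" using mu0 d0 by simp
  hence e0: "e \<ge> 0" using ed by linarith
  have sq: "(e / n)\<^sup>2 * n = (e / n) * e"
    using n0 by (simp add: power2_eq_square)
  have "d\<^sup>2 - 2 * (e / n) * ip + (e / n)\<^sup>2 * n = d\<^sup>2 - (e / n) * (2 * ip - e)"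
    unfolding sq by (simp add: algebra_simps)
  hence "N \<le> d\<^sup>2 - (e / n) * (2 * ip - e)" using NN by linarith
  have ad: "2 * a * d \<le> \<gamma> * (\<mu> - 2 * b)" using dg a0 by (simp add: field_simps)
  have q: "e - 2 * a * d\<^sup>2 - 2 * b * d \<ge> d * ((1 - \<gamma>) * (\<mu> - 2 * b))"
  proof -
    have "e - 2 * a * d\<^sup>2 - 2 * b * d \<ge> d * (\<mu> - 2 * b - 2 * a * d)"
      using ed by (simp add: power2_eq_square algebra_simps)
    moreover have "d * (\<mu> - 2 * b - 2 * a * d) \<ge> d * ((1 - \<gamma>) * (\<mu> - 2 * b))"
      using ad d0 by (intro mult_left_mono) (auto simp: algebra_simps)
    ultimately show ?thesis by linarith
  qed
  have ip2: "2 * ip - e \<ge> e - 2 * a * d\<^sup>2 - 2 * b * d" using ipb by linarith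
  have pos: "d * ((1 - \<gamma>) * (\<mu> - 2 * b)) \<ge> 0" using d0 g1 mu by auto
  have "(e / n) * (2 * ip - e) \<ge> (e / n) * (d * ((1 - \<gamma>) * (\<mu> - 2 * b)))"
    using q ip2 e0 n0 by (intro mult_left_mono) auto
  moreover have "(e / n) * (d * ((1 - \<gamma>) * (\<mu> - 2 * b))) \<ge> (\<mu> * d / L\<^sup>2) * (d * ((1 - \<gamma>) * (\<mu> - 2 * b)))"
  proof (rule mult_right_mono[OF _ pos])
    have "\<mu> * d / L\<^sup>2 \<le> e / L\<^sup>2" using ed L0 by (simp add: divide_right_mono)
    also have "\<dots> \<le> e / n" using e0 n0 nL by (simp add: frac_le)
    finally show "\<mu> * d / L\<^sup>2 \<le> e / n" .
  qed
  ultimately have "N \<le> d\<^sup>2 - (\<mu> * d / L\<^sup>2) * (d * ((1 - \<gamma>) * (\<mu> - 2 * b)))"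
    using \<open>N \<le> d\<^sup>2 - (e / n) * (2 * ip - e)\<close> by linarith
  also have "\<dots> = (1 - (1 - \<gamma>) * \<mu> * (\<mu> - 2 * b) / L\<^sup>2) * d\<^sup>2"
    using L0 by (simp add: power2_eq_square field_simps)
  finally show ?thesis .
qed

theorem theorem7p6:
  fixes X :: "'e::euclidean_space set"
    and h :: "'y::euclidean_space \<Rightarrow> real"
    and F :: "'e \<Rightarrow> 'y"
    and DF :: "'e \<Rightarrow> ('e \<Rightarrow>\<^sub>L 'y)"
    and a b \<mu> \<gamma> :: real
    and x0 :: 'e
    and x \<zeta> :: "nat \<Rightarrow> 'e"
  assumes X_ne: "X \<noteq> {}" and X_closed: "closed X" and X_convex: "convex X"
    and h_convex: "convex_on UNIV h"
    and F_deriv: "\<And>x. (F has_derivative blinfun_apply (DF x)) (at x)"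
    and DF_cont: "continuous_on UNIV DF"
    and argmin_ne: "argmin_on (h \<circ> F) X \<noteq> {}"
    and sharp: "\<And>x. x \<in> X \<Longrightarrow>
        (h \<circ> F) x - (INF z\<in>X. (h \<circ> F) z) \<ge> \<mu> * infdist x (argmin_on (h \<circ> F) X)"
    and approx: "\<And>x y. x \<in> X \<Longrightarrow> y \<in> X \<Longrightarrow>
        \<bar>(h \<circ> F) y - h (F x + DF x (y - x))\<bar> \<le> a * (norm (y - x))\<^sup>2 + b * norm (y - x)"
    and a_pos: "a > 0" and b_nonneg: "b \<ge> 0" and mu_gt: "\<mu> > 2 * b"
    and L_bdd: "bdd_above {norm z | z y. z \<in> comp_subdiff h F DF y \<and> y \<in> X \<and>
                   infdist y (argmin_on (h \<circ> F) X) \<le> (\<mu> - 2 * b) / (2 * a)}"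
    and L_pos: "Sup {norm z | z y. z \<in> comp_subdiff h F DF y \<and> y \<in> X \<and>
                   infdist y (argmin_on (h \<circ> F) X) \<le> (\<mu> - 2 * b) / (2 * a)} > 0"
    and gamma: "0 < \<gamma>" "\<gamma> < 1"
    and x0_X: "x0 \<in> X"
    and x0_close: "infdist x0 (argmin_on (h \<circ> F) X) \<le> \<gamma> * ((\<mu> - 2 * b) / (2 * a))"
    and x_0: "x 0 = x0"
    and zeta_sub: "\<And>k. \<zeta> k \<in> comp_subdiff h F DF (x k)"
    and x_step: "\<And>k. x (Suc k) =
        (if \<zeta> k = 0 then x k
         else closest_point X (x k - (((h \<circ> F) (x k) - (INF z\<in>X. (h \<circ> F) z)) / (norm (\<zeta> k))\<^sup>2) *\<^sub>R \<zeta> k))"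
  shows "\<forall>k. (infdist (x (Suc k)) (argmin_on (h \<circ> F) X))\<^sup>2 \<le>
      (1 - (1 - \<gamma>) * \<mu> * (\<mu> - 2 * b) /
        (Sup {norm z | z y. z \<in> comp_subdiff h F DF y \<and> y \<in> X \<and>
                   infdist y (argmin_on (h \<circ> F) X) \<le> (\<mu> - 2 * b) / (2 * a)})\<^sup>2)
      * (infdist (x k) (argmin_on (h \<circ> F) X))\<^sup>2"
proof -
  define f where "f = h \<circ> F"
  define D where "D = argmin_on f X"
  define fs where "fs = (INF z\<in>X. f z)"
  define r where "r = (\<mu> - 2 * b) / (2 * a)"
  define S where "S = {norm z | z y. z \<in> comp_subdiff h F DF y \<and> y \<in> X \<and> infdist y D \<le> r}"
  define L where "L = Sup S"
  define fac where "fac = 1 - (1 - \<gamma>) * \<mu> * (\<mu> - 2 * b) / L\<^sup>2"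
  have L0: "L > 0" using L_pos unfolding L_def S_def D_def r_def f_def .
  have Sbdd: "bdd_above S" using L_bdd unfolding S_def D_def r_def f_def .
  have r0: "r > 0" using mu_gt a_pos unfolding r_def by auto
  have hcont: "continuous_on UNIV h" using convex_on_continuous[OF open_UNIV h_convex] .
  have Fcont: "continuous_on UNIV F"
    by (rule has_derivative_continuous_on[of UNIV F "\<lambda>x. blinfun_apply (DF x)"]) (use F_deriv in auto)
  have fcont: "continuous_on UNIV f" unfolding f_def using continuous_on_compose[OF Fcont] hcont
    by (metis continuous_on_subset subset_UNIV)
  have Dclosed: "closed D"
  proof -
    have "D = X \<inter> (\<Inter>y\<in>X. {z. f z \<le> f y})" unfolding D_def argmin_on_def by auto
    moreover have "closed (\<Inter>y\<in>X. {z. f z \<le> f y})"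
      using closed_Collect_le[OF fcont continuous_on_const] by auto
    ultimately show ?thesis using X_closed by auto
  qed
  have Dne: "D \<noteq> {}" using argmin_ne unfolding D_def f_def .
  have DX: "D \<subseteq> X" unfolding D_def argmin_on_def by auto
  have fsD: "\<And>p. p \<in> D \<Longrightarrow> f p = fs"
  proof -
    fix p assume p: "p \<in> D"
    have "Inf (f ` X) = f p"
      by (rule cInf_eq_minimum) (use p in \<open>auto simp: D_def argmin_on_def\<close>)
    thus "f p = fs" unfolding fs_def by simp
  qed
  have subgr: "\<And>p q v. v \<in> comp_subdiff h F DF p \<Longrightarrow> f p + v \<bullet> (q - p) \<le> h (F p + DF p (q - p))"
  proof -
    fix p q v assume "v \<in> comp_subdiff h F DF p"
    then obtain w where w: "w \<in> convex_subdiff h (F p)" and v: "v = adjoint (blinfun_apply (DF p)) w"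
      unfolding comp_subdiff_def by auto
    have lin: "linear (blinfun_apply (DF p))"
      by (rule bounded_linear.linear[OF blinfun.bounded_linear_right])
    have "\<forall>z. h z \<ge> h (F p) + w \<bullet> (z - F p)"
      using w unfolding convex_subdiff_def by simp
    hence "h (F p + DF p (q - p)) \<ge> h (F p) + w \<bullet> ((F p + DF p (q - p)) - F p)"
      by (rule spec)
    moreover have "v \<bullet> (q - p) = DF p (q - p) \<bullet> w"
      unfolding v using adjoint_works[OF lin] by (simp add: inner_commute)
    ultimately show "f p + v \<bullet> (q - p) \<le> h (F p + DF p (q - p))"
      by (simp add: f_def inner_commute)
  qed
  have step: "\<And>k. x k \<in> X \<Longrightarrow> infdist (x k) D \<le> \<gamma> * r \<Longrightarrow>
      x (Suc k) \<in> X \<and> (infdist (x (Suc k)) D)\<^sup>2 \<le> fac * (infdist (x k) D)\<^sup>2"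
  proof -
    fix k assume xk: "x k \<in> X" and dk: "infdist (x k) D \<le> \<gamma> * r"
    define d where "d = infdist (x k) D"
    obtain p where pD: "p \<in> D" and dp: "infdist (x k) D = dist (x k) p"
      using infdist_attains_inf[OF Dclosed Dne] by blast
    have pX: "p \<in> X" using pD DX by auto
    have d0: "d \<ge> 0" unfolding d_def by (rule infdist_nonneg)
    have dn: "norm (p - x k) = d" unfolding d_def dp by (simp add: dist_norm norm_minus_commute)
    define e where "e = f (x k) - fs"
    have ed: "e \<ge> \<mu> * d" using sharp[OF xk] unfolding e_def d_def fs_def D_def f_def by simp
    define ip where "ip = \<zeta> k \<bullet> (x k - p)"
    have ipb: "ip \<ge> e - a * d\<^sup>2 - b * d"
    proof -
      have "f (x k) + \<zeta> k \<bullet> (p - x k) \<le> h (F (x k) + DF (x k) (p - x k))"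
        using subgr[OF zeta_sub] .
      moreover have "h (F (x k) + DF (x k) (p - x k)) \<le> f p + a * d\<^sup>2 + b * d"
        using approx[OF xk pX] dn unfolding f_def by auto
      moreover have "\<zeta> k \<bullet> (p - x k) = - ip" unfolding ip_def
        by (simp add: inner_diff_right)
      ultimately show ?thesis using fsD[OF pD] unfolding e_def by linarith
    qed
    have dr: "d \<le> r" using dk gamma r0 unfolding d_def
      by (smt (verit) mult_le_cancel_right1)
    have facle: "fac \<le> 1"
    proof -
      have "(1 - \<gamma>) * \<mu> * (\<mu> - 2 * b) / L\<^sup>2 \<ge> 0"
        using gamma mu_gt b_nonneg by auto
      thus ?thesis unfolding fac_def by linarith
    qed
    show "x (Suc k) \<in> X \<and> (infdist (x (Suc k)) D)\<^sup>2 \<le> fac * (infdist (x k) D)\<^sup>2"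
    proof (cases "\<zeta> k = 0")
      case True
      have xs: "x (Suc k) = x k" using x_step True by simp
      have "d = 0"
      proof (rule ccontr)
        assume "d \<noteq> 0"
        hence dpos: "d > 0" using d0 by auto
        have "ip = 0" unfolding ip_def using True by simp
        hence "0 \<ge> \<mu> * d - a * d\<^sup>2 - b * d" using ipb ed by linarith
        hence "0 \<ge> d * (\<mu> - a * d - b)" by (simp add: power2_eq_square algebra_simps)
        hence "\<mu> - a * d - b \<le> 0" using dpos by (simp add: mult_le_0_iff)
        moreover have "a * d \<le> a * r" using dr a_pos by simp
        moreover have "a * r = (\<mu> - 2 * b) / 2" unfolding r_def using a_pos by simp
        ultimately have "\<mu> - b \<le> (\<mu> - 2 * b) / 2" by linarith
        thus False using mu_gt b_nonneg by (simp add: field_simps)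
      qed
      thus ?thesis using xs xk unfolding d_def by simp
    next
      case False
      define t where "t = e / (norm (\<zeta> k))\<^sup>2"
      define y where "y = x k - t *\<^sub>R \<zeta> k"
      have xs: "x (Suc k) = closest_point X y"
        using x_step False unfolding y_def t_def e_def fs_def f_def by simp
      have xsX: "x (Suc k) \<in> X" unfolding xs by (rule closest_point_in_set[OF X_closed X_ne])
      have "dist (x (Suc k)) p \<le> dist y p"
        using closest_point_lipschitz[OF X_convex X_closed X_ne, of y p] closest_point_self[OF pX]
        unfolding xs by simp
      moreover have "infdist (x (Suc k)) D \<le> dist (x (Suc k)) p" by (rule infdist_le[OF pD])
      ultimately have "infdist (x (Suc k)) D \<le> dist y p" by linarith
      hence N: "(infdist (x (Suc k)) D)\<^sup>2 \<le> (dist y p)\<^sup>2"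
        using infdist_nonneg by (intro power_mono) auto
      have exp: "(dist y p)\<^sup>2 = d\<^sup>2 - 2 * t * ip + t\<^sup>2 * (norm (\<zeta> k))\<^sup>2"
      proof -
        have "(dist y p)\<^sup>2 = (norm ((x k - p) - t *\<^sub>R \<zeta> k))\<^sup>2"
          unfolding y_def dist_norm by (simp add: algebra_simps)
        also have "\<dots> = (norm (x k - p))\<^sup>2 - 2 * t * ip + t\<^sup>2 * (norm (\<zeta> k))\<^sup>2"
          unfolding power2_norm_eq_inner ip_def
          by (simp add: inner_diff_left inner_diff_right inner_commute power2_eq_square algebra_simps)
        finally show ?thesis using dn by (simp add: norm_minus_commute)
      qed
      have n0: "(norm (\<zeta> k))\<^sup>2 > 0" using False by simp
      have inS: "norm (\<zeta> k) \<in> S" unfolding S_def using zeta_sub[of k] xk dr unfolding d_def by blast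
      have nL: "norm (\<zeta> k) \<le> L" unfolding L_def by (rule cSup_upper[OF inS Sbdd])
      have nL2: "(norm (\<zeta> k))\<^sup>2 \<le> L\<^sup>2" using nL by (intro power_mono) auto
      have "(infdist (x (Suc k)) D)\<^sup>2 \<le> fac * d\<^sup>2"
        unfolding fac_def
        by (rule alg_core[OF d0 ed n0 ipb _ dk[folded d_def, unfolded r_def] nL2 L0 a_pos b_nonneg mu_gt gamma])
           (use N exp in \<open>simp add: t_def\<close>)
      thus ?thesis using xsX unfolding d_def by simp
    qed
  qed
  have inv: "\<And>k. x k \<in> X \<and> infdist (x k) D \<le> \<gamma> * r"
  proof -
    fix k show "x k \<in> X \<and> infdist (x k) D \<le> \<gamma> * r"
    proof (induction k)
      case 0 then show ?case using x0_X x0_close x_0 unfolding D_def r_def f_def by simp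
    next
      case (Suc k)
      hence st: "x (Suc k) \<in> X \<and> (infdist (x (Suc k)) D)\<^sup>2 \<le> fac * (infdist (x k) D)\<^sup>2"
        using step by blast
      have facle: "fac \<le> 1"
      proof -
        have "(1 - \<gamma>) * \<mu> * (\<mu> - 2 * b) / L\<^sup>2 \<ge> 0"
          using gamma mu_gt b_nonneg by auto
        thus ?thesis unfolding fac_def by linarith
      qed
      have "fac * (infdist (x k) D)\<^sup>2 \<le> (infdist (x k) D)\<^sup>2"
        using mult_right_mono[OF facle zero_le_power2[of "infdist (x k) D"]] by simp
      hence "(infdist (x (Suc k)) D)\<^sup>2 \<le> (infdist (x k) D)\<^sup>2" using st by linarith
      hence "infdist (x (Suc k)) D \<le> infdist (x k) D"
        using infdist_nonneg power2_le_imp_le by blast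
      thus ?case using st Suc by linarith
    qed
  qed
  have "\<forall>k. (infdist (x (Suc k)) D)\<^sup>2 \<le> fac * (infdist (x k) D)\<^sup>2"
    using step inv by blast
  thus ?thesis unfolding fac_def L_def S_def D_def r_def f_def .
qed

end
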